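(* Let $C$ be a set and let $L_1,L_2$ be objects of $\mathrm{SList}(C)$. Sending a morphism $L_1\to L_2$ to its associated bijection of index sets defines a bijection between the set of morphisms $L_1\to L_2$ in $\mathrm{SList}(C)$ and the set of bijections $\phi:\{0,\dots,\mathrm{length}(L_2)-1\}\xrightarrow{\sim}\{0,\dots,\mathrm{length}(L_1)-1\}$ such that $L_1[\phi(i)]=L_2[i]$ for all $i$.
   Context: $\mathrm{SList}(C)$ is the category whose objects are finite lists of elements of $C$ and whose morphisms are generated by $\mathrm{sw}_{a,b,l}:a::b::l\to b::a::l$ and $x::_mf:x::l\to x::l'$ (for $f:l\to l'$), subject to: functoriality of $x::_m-$, naturality of $\mathrm{sw}_{a,b,l}$ in $l$, $\mathrm{sw}_{b,a,l}\circ\mathrm{sw}_{a,b,l}=\mathrm{Id}$, and the hexagon relation $\mathrm{sw}_{b,c,a::l}\circ(b::_m\mathrm{sw}_{a,c,l})\circ\mathrm{sw}_{a,b,c::l}=(c::_m\mathrm{sw}_{a,b,l})\circ\mathrm{sw}_{a,c,b::l}\circ(a::_m\mathrm{sw}_{b,c,l})$. $L[i]$ denotes the $i$-th entry (0-indexed) of the list $L$. The bijection associated to a morphism $f:L_1\to L_2$ is the map $\{0,\dots,\mathrm{length}(L_2)-1\}\to\{0,\dots,\mathrm{length}(L_1)-1\}$ obtained by restricting the permutation of $\mathbb{N}$ given by the image of $w(f)$ under the homomorphism $\overline{\mathrm{A}_\infty}\to\mathrm{Perm}(\mathbb{N})$, $s_k\mapsto(k\ k+1)$; here $w$ is the functor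 $\mathrm{SList}(C)\to(\mathrm{B}\overline{\mathrm{A}_\infty})^{\mathrm{op}}$ with $w(\mathrm{sw}_{a,b,l})=s_0$ and $w(x::_mf)$ obtained from $w(f)$ by the shift $s_i\mapsto s_{i+1}$ ($\overline{\mathrm{A}_\infty}$ being the Coxeter group with generators $s_i$, $i\in\mathbb{N}$, relations $s_i^2=e$, $(s_is_{i+1})^3=e$, $(s_is_j)^2=e$ for $|i-j|>1$). Concretely, $\mathrm{sw}_{a,b,l}$ corresponds to the transposition of indices $0$ and $1$, and $x::_mf$ fixes index $0$ and acts as the bijection of $f$ shifted by one on the remaining indices. *)

theory Defs
  imports "HOL-Library.FuncSet"
begin

text \<open>Syntactic morphism terms of SList(C), with C a type 'c.
  MComp g f denotes g composed after f.\<close>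
datatype 'c mterm =
    MId "'c list"
  | MSw 'c 'c "'c list"
  | MCons 'c "'c mterm"
  | MComp "'c mterm" "'c mterm"

inductive mtyped :: "'c mterm \<Rightarrow> 'c list \<Rightarrow> 'c list \<Rightarrow> bool" where
  ty_id: "mtyped (MId l) l l"
| ty_sw: "mtyped (MSw a b l) (a # b # l) (b # a # l)"
| ty_cons: "mtyped f l l' \<Longrightarrow> mtyped (MCons x f) (x # l) (x # l')"
| ty_comp: "mtyped f l1 l2 \<Longrightarrow> mtyped g l2 l3 \<Longrightarrow> mtyped (MComp g f) l1 l3"

inductive meqv :: "'c mterm \<Rightarrow> 'c mterm \<Rightarrow> bool" where
  eq_refl: "mtyped f l1 l2 \<Longrightarrow> meqv f f"
| eq_sym: "meqv f g \<Longrightarrow> meqv g f"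
| eq_trans: "meqv f g \<Longrightarrow> meqv g h \<Longrightarrow> meqv f h"
| eq_cong_cons: "meqv f g \<Longrightarrow> meqv (MCons x f) (MCons x g)"
| eq_cong_comp: "meqv f f' \<Longrightarrow> meqv g g' \<Longrightarrow> mtyped f l1 l2 \<Longrightarrow> mtyped g l2 l3
      \<Longrightarrow> meqv (MComp g f) (MComp g' f')"
| eq_id_left: "mtyped f l1 l2 \<Longrightarrow> meqv (MComp (MId l2) f) f"
| eq_id_right: "mtyped f l1 l2 \<Longrightarrow> meqv (MComp f (MId l1)) f"
| eq_assoc: "mtyped f l1 l2 \<Longrightarrow> mtyped g l2 l3 \<Longrightarrow> mtyped h l3 l4
      \<Longrightarrow> meqv (MComp h (MComp g f)) (MComp (MComp h g) f)"
| eq_cons_id: "meqv (MCons x (MId l)) (MId (x # l))"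
| eq_cons_comp: "mtyped f l1 l2 \<Longrightarrow> mtyped g l2 l3
      \<Longrightarrow> meqv (MCons x (MComp g f)) (MComp (MCons x g) (MCons x f))"
| eq_nat: "mtyped f l l'
      \<Longrightarrow> meqv (MComp (MCons b (MCons a f)) (MSw a b l)) (MComp (MSw a b l') (MCons a (MCons b f)))"
| eq_inv: "meqv (MComp (MSw b a l) (MSw a b l)) (MId (a # b # l))"
| eq_hex: "meqv (MComp (MSw b c (a # l)) (MComp (MCons b (MSw a c l)) (MSw a b (c # l))))
               (MComp (MCons c (MSw a b l)) (MComp (MSw a c (b # l)) (MCons a (MSw b c l))))"

definition slist_rel :: "'c list \<Rightarrow> 'c list \<Rightarrow> ('c mterm \<times> 'c mterm) set" where
  "slist_rel L1 L2 = {(f, g). mtyped f L1 L2 \<and> mtyped g L1 L2 \<and> meqv f g}"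

definition slist_hom :: "'c list \<Rightarrow> 'c list \<Rightarrow> 'c mterm set set" where
  "slist_hom L1 L2 = {f. mtyped f L1 L2} // slist_rel L1 L2"

text \<open>Permutation of the naturals associated to a term (the image of w(f) in Perm(N)):
  sw is the transposition (0 1), MCons fixes 0 and shifts, and composition is
  contravariant since w lands in the opposite category.\<close>
fun mperm :: "'c mterm \<Rightarrow> nat \<Rightarrow> nat" where
  "mperm (MId l) = id"
| "mperm (MSw a b l) = (\<lambda>i. if i = 0 then 1 else if i = 1 then 0 else i)"
| "mperm (MCons x f) = (\<lambda>i. if i = 0 then 0 else Suc (mperm f (i - 1)))"
| "mperm (MComp g f) = mperm f \<circ> mperm g"

definition assoc_bij :: "'c list \<Rightarrow> 'c mterm set \<Rightarrow> nat \<Rightarrow> nat" where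
  "assoc_bij L2 X = the_elem ((\<lambda>f. restrict (mperm f) {..<length L2}) ` X)"

end

theory Submission
  imports Defs
begin


fun ty :: "'c mterm \<Rightarrow> ('c list \<times> 'c list) option" where
  "ty (MId l) = Some (l, l)"
| "ty (MSw a b l) = Some (a # b # l, b # a # l)"
| "ty (MCons x f) = map_option (\<lambda>(l, l'). (x # l, x # l')) (ty f)"
| "ty (MComp g f) = (case ty f of None \<Rightarrow> None | Some (a, b) \<Rightarrow>
      (case ty g of None \<Rightarrow> None | Some (c, d) \<Rightarrow> if b = c then Some (a, d) else None))"

lemma mtyped_ty: "mtyped f l1 l2 \<Longrightarrow> ty f = Some (l1, l2)"
  by (induction rule: mtyped.induct) auto

lemma ty_mtyped: "ty f = Some (l1, l2) \<Longrightarrow> mtyped f l1 l2"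
proof (induction f arbitrary: l1 l2)
  case (MId x)
  then show ?case by (auto intro: mtyped.intros)
next
  case (MSw x1 x2 x3)
  then show ?case by (auto intro: mtyped.intros)
next
  case (MCons x1 f)
  then show ?case by (auto intro: mtyped.intros)
next
  case (MComp f1 f2)
  then show ?case by (auto split: option.splits if_splits) (meson ty_comp)
qed

lemma mtyped_iff: "mtyped f l1 l2 \<longleftrightarrow> ty f = Some (l1, l2)"
  using mtyped_ty ty_mtyped by blast

lemma meqv_ty0: "meqv f g \<Longrightarrow> \<exists>p. ty f = Some p \<and> ty g = Some p"
  by (induction rule: meqv.induct) (auto simp: mtyped_iff)

lemma meqv_ty: "meqv f g \<Longrightarrow> ty f = ty g \<and> ty f \<noteq> None"
  using meqv_ty0 by fastforce

lemma meqv_sound: "meqv f g \<Longrightarrow> mperm f = mperm g"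
proof (induction rule: meqv.induct)
  case (eq_hex b c a l)
  show ?case
  proof
    fix i :: nat
    show "mperm (MComp (MSw b c (a # l)) (MComp (MCons b (MSw a c l)) (MSw a b (c # l)))) i =
          mperm (MComp (MCons c (MSw a b l)) (MComp (MSw a c (b # l)) (MCons a (MSw b c l)))) i"
      by (cases i; cases "i - 1"; cases "i - 2"; simp)
  qed
qed (auto simp: fun_eq_iff)

lemmas m_trans = eq_trans
lemmas m_sym = eq_sym

lemma m_refl: "ty f \<noteq> None \<Longrightarrow> meqv f f"
  by (auto simp: mtyped_iff[symmetric] intro: eq_refl)

lemma m_comp: "meqv f f' \<Longrightarrow> meqv g g' \<Longrightarrow> ty (MComp g f) \<noteq> None \<Longrightarrow> meqv (MComp g f) (MComp g' f')"
  by (auto simp: mtyped_iff[symmetric] split: option.splits if_splits) (metis eq_cong_comp)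

lemma m_compL: "meqv g g' \<Longrightarrow> ty (MComp g f) \<noteq> None \<Longrightarrow> meqv (MComp g f) (MComp g' f)"
  by (rule m_comp) (auto intro: m_refl split: option.splits if_splits)

lemma m_compR: "meqv f f' \<Longrightarrow> ty (MComp g f) \<noteq> None \<Longrightarrow> meqv (MComp g f) (MComp g f')"
  by (rule m_comp) (auto intro: m_refl split: option.splits if_splits)

lemma m_assoc: "ty (MComp h (MComp g f)) \<noteq> None \<Longrightarrow> meqv (MComp h (MComp g f)) (MComp (MComp h g) f)"
  by (auto simp: mtyped_iff[symmetric] split: option.splits if_splits) (metis eq_assoc)

lemma m_assoc': "ty (MComp h (MComp g f)) \<noteq> None \<Longrightarrow> meqv (MComp (MComp h g) f) (MComp h (MComp g f))"
  by (rule m_sym, rule m_assoc)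

lemma m_cons_comp: "ty (MComp g f) \<noteq> None \<Longrightarrow> meqv (MCons x (MComp g f)) (MComp (MCons x g) (MCons x f))"
  by (auto simp: mtyped_iff[symmetric] split: option.splits if_splits) (metis eq_cons_comp)

lemma m_cons_comp': "ty (MComp g f) \<noteq> None \<Longrightarrow> meqv (MComp (MCons x g) (MCons x f)) (MCons x (MComp g f))"
  by (rule m_sym, rule m_cons_comp)

lemma m_id_left: "ty f = Some (l1, l2) \<Longrightarrow> meqv (MComp (MId l2) f) f"
  by (rule eq_id_left) (simp add: mtyped_iff)

lemma m_id_right: "ty f = Some (l1, l2) \<Longrightarrow> meqv (MComp f (MId l1)) f"
  by (rule eq_id_right) (simp add: mtyped_iff)

lemma m_nat: "ty f = Some (l, l') \<Longrightarrow>
   meqv (MComp (MCons b (MCons a f)) (MSw a b l)) (MComp (MSw a b l') (MCons a (MCons b f)))"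
  by (rule eq_nat) (simp add: mtyped_iff)

lemma m_nat': "ty f = Some (l, l') \<Longrightarrow>
   meqv (MComp (MSw a b l') (MCons a (MCons b f))) (MComp (MCons b (MCons a f)) (MSw a b l))"
  by (rule m_sym, rule m_nat)

fun rem :: "nat \<Rightarrow> 'a list \<Rightarrow> 'a list" where
  "rem _ [] = []"
| "rem 0 (x # l) = l"
| "rem (Suc k) (x # l) = x # rem k l"

fun bring :: "nat \<Rightarrow> 'c list \<Rightarrow> 'c mterm" where
  "bring 0 l = MId l"
| "bring (Suc k) [] = MId []"
| "bring (Suc k) (x # l) = MComp (MSw x (l ! k) (rem k l)) (MCons x (bring k l))"

definition idx :: "nat \<Rightarrow> nat \<Rightarrow> nat" where "idx p q = (if q < p then q else q - 1)"
definition unidx :: "nat \<Rightarrow> nat \<Rightarrow> nat" where "unidx i m = (if m < i then m else Suc m)"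

lemma length_rem[simp]: "i < length L \<Longrightarrow> length (rem i L) = length L - 1"
  by (induction i L rule: rem.induct) auto

lemma nth_rem: "i < length L \<Longrightarrow> j < length L - 1 \<Longrightarrow> rem i L ! j = L ! unidx i j"
  by (induction i L arbitrary: j rule: rem.induct) (auto simp: unidx_def nth_Cons split: nat.splits)

lemma idx_unidx[simp]: "idx i (unidx i j) = j"
  by (auto simp: idx_def unidx_def)

lemma unidx_idx[simp]: "q \<noteq> i \<Longrightarrow> unidx i (idx i q) = q"
  by (auto simp: idx_def unidx_def)

lemma rem_rem: "p \<noteq> q \<Longrightarrow> p < length L \<Longrightarrow> q < length L \<Longrightarrow>
   rem (idx p q) (rem p L) = rem (idx q p) (rem q L)"
proof (induction L arbitrary: p q)
  case Nil then show ?case by simp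
next
  case (Cons x l)
  show ?case
  proof (cases p)
    case 0 then obtain k where "q = Suc k" using Cons by (cases q) auto
    then show ?thesis using 0 by (simp add: idx_def)
  next
    case (Suc j)
    show ?thesis
    proof (cases q)
      case 0 then show ?thesis using Suc by (simp add: idx_def)
    next
      case (Suc k)
      have "rem (idx j k) (rem j l) = rem (idx k j) (rem k l)"
        using Cons `p = Suc j` Suc by auto
      moreover have "idx (Suc j) (Suc k) = Suc (idx j k)" "idx (Suc k) (Suc j) = Suc (idx k j)"
        using Cons `p = Suc j` Suc by (auto simp: idx_def)
      ultimately show ?thesis using `p = Suc j` Suc by simp
    qed
  qed
qed

lemma ty_bring[simp]: "i < length L \<Longrightarrow> ty (bring i L) = Some (L, L ! i # rem i L)"
  by (induction i L rule: bring.induct) (auto simp: neq_Nil_conv)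

lemma mperm_bring0: "i < length L \<Longrightarrow> mperm (bring i L) 0 = i"
  by (induction i L rule: bring.induct) auto

lemma mperm_bringS: "i < length L \<Longrightarrow> mperm (bring i L) (Suc m) = unidx i m"
proof (induction i L arbitrary: m rule: bring.induct)
  case (3 k x l)
  then show ?case by (cases m) (auto simp: unidx_def)
qed (auto simp: unidx_def)



declare eq_trans[trans]

definition D :: "nat \<Rightarrow> nat \<Rightarrow> 'c list \<Rightarrow> 'c mterm" where
  "D p q L = MComp (MCons (L ! p) (bring (idx p q) (rem p L))) (bring p L)"

lemma idx_less: "p \<noteq> q \<Longrightarrow> p < n \<Longrightarrow> q < n \<Longrightarrow> idx p q < n - 1"
  by (auto simp: idx_def)

lemma ty_D: "p \<noteq> q \<Longrightarrow> p < length L \<Longrightarrow> q < length L \<Longrightarrow>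
   ty (D p q L) = Some (L, L ! p # L ! q # rem (idx p q) (rem p L))"
proof -
  assume a: "p \<noteq> q" "p < length L" "q < length L"
  have "idx p q < length (rem p L)" using idx_less[OF a] a by simp
  moreover have "rem p L ! idx p q = L ! q" using a idx_less[OF a] by (simp add: nth_rem)
  ultimately show ?thesis using a by (simp add: D_def)
qed

lemma K_lt: "p < q \<Longrightarrow> q < length L \<Longrightarrow>
   meqv (MComp (MSw (L ! p) (L ! q) (rem (idx p q) (rem p L))) (D p q L)) (D q p L)"
proof (induction L arbitrary: p q)
  case Nil then show ?case by simp
next
  case (Cons x l)
  show ?case
  proof (cases p)
    case 0
    then obtain k where q: "q = Suc k" and k: "k < length l" using Cons by (cases q) auto
    let ?S = "MComp (MSw x (l ! k) (rem k l)) (MCons x (bring k l))"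
    have "MComp (MSw ((x # l) ! p) ((x # l) ! q) (rem (idx p q) (rem p (x # l)))) (D p q (x # l))
        = MComp (MSw x (l ! k) (rem k l)) (MComp (MCons x (bring k l)) (MId (x # l)))"
      using 0 q by (simp add: D_def idx_def)
    also have "meqv \<dots> ?S"
      by (rule m_compR, rule m_id_right[of _ _ "x # l ! k # rem k l"]) (use k in simp_all)
    also have "meqv \<dots> (MComp (MId (l ! k # x # rem k l)) ?S)"
      by (rule m_sym, rule m_id_left[of _ "x # l"]) (use k in simp)
    also have "meqv \<dots> (MComp (MCons (l ! k) (MId (x # rem k l))) ?S)"
      by (rule m_compL, rule m_sym, rule eq_cons_id) (use k in simp)
    also have "\<dots> = D q p (x # l)"
      using 0 q by (simp add: D_def idx_def)
    finally show ?thesis .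
  next
    case (Suc j)
    have "q = Suc (Suc (q - 2)) \<and> j \<le> q - 2 \<and> Suc (q - 2) < length l" using Cons.prems Suc by auto
    then obtain k' where q: "q = Suc (Suc k')" and jk: "j \<le> k'" and kl: "Suc k' < length l"
      by blast
    have jl: "j < length l" using jk kl by simp
    have hz: "rem j l ! k' = l ! Suc k'" using jk kl jl by (simp add: nth_rem unidx_def)
    have hy: "rem (Suc k') l ! j = l ! j" using jk kl by (simp add: nth_rem unidx_def)
    have hR: "rem j (rem (Suc k') l) = rem k' (rem j l)"
      using rem_rem[of j "Suc k'" l] jk kl by (simp add: idx_def)
    have l1: "k' < length (rem j l)" "j < length (rem (Suc k') l)" using jk kl by auto
    let ?y = "l ! j" let ?z = "l ! Suc k'" let ?R = "rem k' (rem j l)"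
    let ?rj = "rem j l" let ?rk = "rem (Suc k') l"
    let ?Bk' = "bring k' (rem j l)" let ?Bj = "bring j l"
    let ?Bj' = "bring j (rem (Suc k') l)" let ?Bk = "bring (Suc k') l"
    have l2: "k' < length l - 1" "j < length l - 1" using jk kl by auto
    have tb: "ty (bring k' (rem j l)) = Some (rem j l, l ! Suc k' # rem k' (rem j l))"
      "ty (bring j l) = Some (l, l ! j # rem j l)"
      "ty (bring j (rem (Suc k') l)) = Some (rem (Suc k') l, l ! j # rem k' (rem j l))"
      "ty (bring (Suc k') l) = Some (l, l ! Suc k' # rem (Suc k') l)"
      using ty_bring[OF l1(1)] ty_bring[OF jl] ty_bring[OF l1(2)] ty_bring[OF kl] hz hy hR by simp_all
    note ss = hz hy hR tb
    have IH: "meqv (MComp (MSw ?y ?z ?R) (MComp (MCons ?y ?Bk') ?Bj)) (MComp (MCons ?z ?Bj') ?Bk)"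
      using Cons.IH[of j "Suc k'"] jk kl by (simp add: D_def idx_def)
    have "MComp (MSw ((x # l) ! p) ((x # l) ! q) (rem (idx p q) (rem p (x # l)))) (D p q (x # l))
       = MComp (MSw ?y ?z (x # ?R)) (MComp (MCons ?y (MComp (MSw x ?z ?R) (MCons x ?Bk')))
            (MComp (MSw x ?y ?rj) (MCons x ?Bj)))"
      using Suc q hz jk by (simp add: D_def idx_def)
    also have "meqv \<dots> (MComp (MSw ?y ?z (x # ?R)) (MComp (MComp (MCons ?y (MSw x ?z ?R)) (MCons ?y (MCons x ?Bk')))
            (MComp (MSw x ?y ?rj) (MCons x ?Bj))))"
      by (rule m_compR[OF m_compL[OF m_cons_comp]]) (simp_all add: ss)
    also have "meqv \<dots> (MComp (MSw ?y ?z (x # ?R)) (MComp (MCons ?y (MSw x ?z ?R)) (MComp (MCons ?y (MCons x ?Bk'))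
            (MComp (MSw x ?y ?rj) (MCons x ?Bj)))))"
      by (rule m_compR[OF m_assoc']) (simp_all add: ss)
    also have "meqv \<dots> (MComp (MSw ?y ?z (x # ?R)) (MComp (MCons ?y (MSw x ?z ?R)) (MComp (MComp (MCons ?y (MCons x ?Bk'))
            (MSw x ?y ?rj)) (MCons x ?Bj))))"
      by (rule m_compR[OF m_compR[OF m_assoc]]) (simp_all add: ss)
    also have "meqv \<dots> (MComp (MSw ?y ?z (x # ?R)) (MComp (MCons ?y (MSw x ?z ?R)) (MComp (MComp (MSw x ?y (?z # ?R))
            (MCons x (MCons ?y ?Bk'))) (MCons x ?Bj))))"
      by (rule m_compR[OF m_compR[OF m_compL[OF m_nat]]]) (simp_all add: ss)
    also have "meqv \<dots> (MComp (MSw ?y ?z (x # ?R)) (MComp (MCons ?y (MSw x ?z ?R)) (MComp (MSw x ?y (?z # ?R))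
            (MComp (MCons x (MCons ?y ?Bk')) (MCons x ?Bj)))))"
      by (rule m_compR[OF m_compR[OF m_assoc']]) (simp_all add: ss)
    also have "meqv \<dots> (MComp (MSw ?y ?z (x # ?R)) (MComp (MCons ?y (MSw x ?z ?R)) (MComp (MSw x ?y (?z # ?R))
            (MCons x (MComp (MCons ?y ?Bk') ?Bj)))))"
      by (rule m_compR[OF m_compR[OF m_compR[OF m_cons_comp']]]) (simp_all add: ss)
    also have "meqv \<dots> (MComp (MComp (MSw ?y ?z (x # ?R)) (MComp (MCons ?y (MSw x ?z ?R)) (MSw x ?y (?z # ?R))))
            (MCons x (MComp (MCons ?y ?Bk') ?Bj)))"
      by (rule m_trans[OF m_compR[OF m_assoc] m_assoc]) (simp_all add: ss)
    also have "meqv \<dots> (MComp (MComp (MCons ?z (MSw x ?y ?R)) (MComp (MSw x ?z (?y # ?R)) (MCons x (MSw ?y ?z ?R))))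
            (MCons x (MComp (MCons ?y ?Bk') ?Bj)))"
      by (rule m_compL[OF eq_hex]) (simp_all add: ss)
    also have "meqv \<dots> (MComp (MCons ?z (MSw x ?y ?R)) (MComp (MSw x ?z (?y # ?R)) (MComp (MCons x (MSw ?y ?z ?R))
            (MCons x (MComp (MCons ?y ?Bk') ?Bj)))))"
      by (rule m_trans[OF m_assoc' m_compR[OF m_assoc']]) (simp_all add: ss)
    also have "meqv \<dots> (MComp (MCons ?z (MSw x ?y ?R)) (MComp (MSw x ?z (?y # ?R))
            (MCons x (MComp (MSw ?y ?z ?R) (MComp (MCons ?y ?Bk') ?Bj)))))"
      by (rule m_compR[OF m_compR[OF m_cons_comp']]) (simp_all add: ss)
    also have "meqv \<dots> (MComp (MCons ?z (MSw x ?y ?R)) (MComp (MSw x ?z (?y # ?R))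
            (MCons x (MComp (MCons ?z ?Bj') ?Bk))))"
      by (rule m_compR[OF m_compR[OF eq_cong_cons[OF IH]]]) (simp_all add: ss)
    also have "meqv \<dots> (MComp (MCons ?z (MSw x ?y ?R)) (MComp (MSw x ?z (?y # ?R))
            (MComp (MCons x (MCons ?z ?Bj')) (MCons x ?Bk))))"
      by (rule m_compR[OF m_compR[OF m_cons_comp]]) (simp_all add: ss)
    also have "meqv \<dots> (MComp (MCons ?z (MSw x ?y ?R)) (MComp (MComp (MSw x ?z (?y # ?R))
            (MCons x (MCons ?z ?Bj'))) (MCons x ?Bk)))"
      by (rule m_compR[OF m_assoc]) (simp_all add: ss)
    also have "meqv \<dots> (MComp (MCons ?z (MSw x ?y ?R)) (MComp (MComp (MCons ?z (MCons x ?Bj')) (MSw x ?z ?rk))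
            (MCons x ?Bk)))"
      by (rule m_compR[OF m_compL[OF m_nat']]) (simp_all add: ss)
    also have "meqv \<dots> (MComp (MCons ?z (MSw x ?y ?R)) (MComp (MCons ?z (MCons x ?Bj')) (MComp (MSw x ?z ?rk)
            (MCons x ?Bk))))"
      by (rule m_compR[OF m_assoc']) (simp_all add: ss)
    also have "meqv \<dots> (MComp (MComp (MCons ?z (MSw x ?y ?R)) (MCons ?z (MCons x ?Bj'))) (MComp (MSw x ?z ?rk)
            (MCons x ?Bk)))"
      by (rule m_assoc) (simp_all add: ss)
    also have "meqv \<dots> (MComp (MCons ?z (MComp (MSw x ?y ?R) (MCons x ?Bj'))) (MComp (MSw x ?z ?rk)
            (MCons x ?Bk)))"
      by (rule m_compL[OF m_cons_comp']) (simp_all add: ss)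
    also have "\<dots> = D q p (x # l)"
      using Suc q hy hR jk by (simp add: D_def idx_def)
    finally show ?thesis .
  qed
qed

lemma K: assumes "p \<noteq> q" "p < length L" "q < length L"
  shows "meqv (MComp (MSw (L ! p) (L ! q) (rem (idx p q) (rem p L))) (D p q L)) (D q p L)"
proof (cases "p < q")
  case True then show ?thesis using K_lt assms by blast
next
  case False
  then have qp: "q < p" using assms by simp
  let ?R = "rem (idx p q) (rem p L)"
  have RR: "rem (idx q p) (rem q L) = ?R" using rem_rem assms by metis
  have k: "meqv (MComp (MSw (L ! q) (L ! p) ?R) (D q p L)) (D p q L)"
    using K_lt[OF qp assms(2)] RR by simp
  have tD: "ty (D q p L) = Some (L, L ! q # L ! p # ?R)" using ty_D[of q p L] assms RR by simp
  have "meqv (MComp (MSw (L ! p) (L ! q) ?R) (D p q L))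
     (MComp (MSw (L ! p) (L ! q) ?R) (MComp (MSw (L ! q) (L ! p) ?R) (D q p L)))"
    by (rule m_compR[OF m_sym[OF k]]) (simp add: ty_D assms)
  also have "meqv \<dots> (MComp (MComp (MSw (L ! p) (L ! q) ?R) (MSw (L ! q) (L ! p) ?R)) (D q p L))"
    by (rule m_assoc) (simp add: tD)
  also have "meqv \<dots> (MComp (MId (L ! q # L ! p # ?R)) (D q p L))"
    by (rule m_compL[OF eq_inv]) (simp add: tD)
  also have "meqv \<dots> (D q p L)"
    by (rule m_id_left[OF tD])
  finally show ?thesis .
qed



inductive NF :: "'c mterm \<Rightarrow> bool" where
  nf_nil: "NF (MId [])"
| nf_cons: "NF c \<Longrightarrow> i < length L \<Longrightarrow> L ! i = x \<Longrightarrow> ty c = Some (rem i L, l)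
     \<Longrightarrow> NF (MComp (MCons x c) (bring i L))"

lemma nf_id: "\<exists>c. NF c \<and> ty c = Some (L, L) \<and> meqv c (MId L)"
proof (induction L)
  case Nil then show ?case by (rule exI[of _ "MId []"]) (auto intro: nf_nil m_refl)
next
  case (Cons x l)
  then obtain c where c: "NF c" "ty c = Some (l, l)" "meqv c (MId l)" by blast
  let ?d = "MComp (MCons x c) (bring 0 (x # l))"
  have "NF ?d" by (rule nf_cons[OF c(1)]) (use c in simp_all)
  moreover have "ty ?d = Some (x # l, x # l)" using c by simp
  moreover have "meqv ?d (MId (x # l))"
  proof -
    have "meqv ?d (MCons x c)" using m_id_right[of "MCons x c" "x # l" "x # l"] c by simp
    also have "meqv \<dots> (MCons x (MId l))" by (rule eq_cong_cons[OF c(3)])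
    also have "meqv \<dots> (MId (x # l))" by (rule eq_cons_id)
    finally show ?thesis .
  qed
  ultimately show ?case by blast
qed

lemma nf_decomp: "NF c \<Longrightarrow> ty c = Some (L0, x # l) \<Longrightarrow>
  \<exists>i c'. c = MComp (MCons x c') (bring i L0) \<and> NF c' \<and> i < length L0 \<and> L0 ! i = x
     \<and> ty c' = Some (rem i L0, l)"
  by (erule NF.cases) auto

lemma ex_nf_comp: "mtyped f L1 L2 \<Longrightarrow> NF c \<Longrightarrow> ty c = Some (L0, L1) \<Longrightarrow>
   \<exists>d. NF d \<and> ty d = Some (L0, L2) \<and> meqv (MComp f c) d"
proof (induction arbitrary: c L0 rule: mtyped.induct)
  case (ty_id l)
  then show ?case using m_id_left by blast
next
  case (ty_sw a b l)
  obtain i c1 where c: "c = MComp (MCons a c1) (bring i L0)" "NF c1" "i < length L0" "L0 ! i = a"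
     "ty c1 = Some (rem i L0, b # l)" using nf_decomp[OF ty_sw(1,2)] by blast
  obtain j c2 where c1: "c1 = MComp (MCons b c2) (bring j (rem i L0))" "NF c2" "j < length (rem i L0)"
     "rem i L0 ! j = b" "ty c2 = Some (rem j (rem i L0), l)" using nf_decomp[OF c(2,5)] by blast
  define i' where "i' = unidx i j"
  define j' where "j' = idx i' i"
  let ?R = "rem j (rem i L0)"
  have jl: "j < length L0 - 1" using c1(3) c(3) by simp
  have i'l: "i' < length L0" using jl c(3) by (auto simp: i'_def unidx_def)
  have ii': "i \<noteq> i'" by (auto simp: i'_def unidx_def)
  have bi': "L0 ! i' = b" using nth_rem[OF c(3) jl] c1(4) by (simp add: i'_def)
  have jj: "idx i i' = j" by (simp add: i'_def)
  have j'l: "j' < length (rem i' L0)" using idx_less[of i' i "length L0"] ii' i'l c(3) by (simp add: j'_def)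
  have aj': "rem i' L0 ! j' = a"
    using nth_rem[of i' L0 j'] j'l i'l ii' c(4) by (simp add: j'_def)
  have RR: "rem j' (rem i' L0) = ?R" using rem_rem[of i' i L0] ii' i'l c(3) jj by (simp add: j'_def)
  let ?d = "MComp (MCons b (MComp (MCons a c2) (bring j' (rem i' L0)))) (bring i' L0)"
  have tb: "ty (bring j (rem i L0)) = Some (rem i L0, b # ?R)"
    "ty (bring i L0) = Some (L0, a # rem i L0)"
    "ty (bring j' (rem i' L0)) = Some (rem i' L0, a # ?R)"
    "ty (bring i' L0) = Some (L0, b # rem i' L0)"
    using ty_bring[OF c1(3)] ty_bring[OF c(3)] ty_bring[OF j'l] ty_bring[OF i'l] c1(4) c(4) aj' RR bi'
    by simp_all
  note ss = tb c1(5)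
  have NFd: "NF ?d"
  proof (rule nf_cons[OF _ i'l bi'])
    show "NF (MComp (MCons a c2) (bring j' (rem i' L0)))"
      by (rule nf_cons[OF c1(2) j'l aj']) (simp add: RR c1(5))
    show "ty (MComp (MCons a c2) (bring j' (rem i' L0))) = Some (rem i' L0, a # l)"
      by (simp add: ss)
  qed
  have K': "meqv (MComp (MSw a b ?R) (MComp (MCons a (bring j (rem i L0))) (bring i L0)))
           (MComp (MCons b (bring j' (rem i' L0))) (bring i' L0))"
    using K[OF ii' c(3) i'l] c(4) bi' jj by (simp add: D_def j'_def)
  have "meqv (MComp (MSw a b l) c) (MComp (MSw a b l) (MComp (MComp (MCons a (MCons b c2)) (MCons a (bring j (rem i L0)))) (bring i L0)))"
    unfolding c(1) c1(1) by (rule m_compR[OF m_compL[OF m_cons_comp]]) (simp_all add: ss)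
  also have "meqv \<dots> (MComp (MSw a b l) (MComp (MCons a (MCons b c2)) (MComp (MCons a (bring j (rem i L0))) (bring i L0))))"
    by (rule m_compR[OF m_assoc']) (simp_all add: ss)
  also have "meqv \<dots> (MComp (MComp (MSw a b l) (MCons a (MCons b c2))) (MComp (MCons a (bring j (rem i L0))) (bring i L0)))"
    by (rule m_assoc) (simp_all add: ss)
  also have "meqv \<dots> (MComp (MComp (MCons b (MCons a c2)) (MSw a b ?R)) (MComp (MCons a (bring j (rem i L0))) (bring i L0)))"
    by (rule m_compL[OF m_nat']) (simp_all add: ss)
  also have "meqv \<dots> (MComp (MCons b (MCons a c2)) (MComp (MSw a b ?R) (MComp (MCons a (bring j (rem i L0))) (bring i L0))))"
    by (rule m_assoc') (simp_all add: ss)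
  also have "meqv \<dots> (MComp (MCons b (MCons a c2)) (MComp (MCons b (bring j' (rem i' L0))) (bring i' L0)))"
    by (rule m_compR[OF K']) (simp_all add: ss)
  also have "meqv \<dots> (MComp (MComp (MCons b (MCons a c2)) (MCons b (bring j' (rem i' L0)))) (bring i' L0))"
    by (rule m_assoc) (simp_all add: ss)
  also have "meqv \<dots> ?d"
    by (rule m_compL[OF m_cons_comp']) (simp_all add: ss)
  finally have "meqv (MComp (MSw a b l) c) ?d" .
  moreover have "ty ?d = Some (L0, b # a # l)" by (simp add: ss)
  ultimately show ?case using NFd by blast
next
  case (ty_cons f l l' x)
  obtain i c' where c: "c = MComp (MCons x c') (bring i L0)" "NF c'" "i < length L0" "L0 ! i = x"
     "ty c' = Some (rem i L0, l)" using nf_decomp[OF ty_cons(3,4)] by blast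
  obtain d' where d': "NF d'" "ty d' = Some (rem i L0, l')" "meqv (MComp f c') d'"
    using ty_cons.IH[OF c(2,5)] by blast
  have tf: "ty f = Some (l, l')" using ty_cons(1) by (simp add: mtyped_iff)
  have tb: "ty (bring i L0) = Some (L0, x # rem i L0)" using ty_bring[OF c(3)] c(4) by simp
  let ?d = "MComp (MCons x d') (bring i L0)"
  have "meqv (MComp (MCons x f) c) (MComp (MComp (MCons x f) (MCons x c')) (bring i L0))"
    unfolding c(1) by (rule m_assoc) (simp add: tf tb c(5))
  also have "meqv \<dots> (MComp (MCons x (MComp f c')) (bring i L0))"
    by (rule m_compL[OF m_cons_comp']) (simp_all add: tf tb c(5))
  also have "meqv \<dots> ?d"
    by (rule m_compL[OF eq_cong_cons[OF d'(3)]]) (simp add: tf tb c(5))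
  finally have "meqv (MComp (MCons x f) c) ?d" .
  moreover have "NF ?d" by (rule nf_cons[OF d'(1) c(3) c(4) d'(2)])
  moreover have "ty ?d = Some (L0, x # l')" using tb d'(2) by simp
  ultimately show ?case by blast
next
  case (ty_comp f l1 l2 g l3)
  obtain d1 where d1: "NF d1" "ty d1 = Some (L0, l2)" "meqv (MComp f c) d1"
    using ty_comp.IH(1)[OF ty_comp.prems] by blast
  obtain d2 where d2: "NF d2" "ty d2 = Some (L0, l3)" "meqv (MComp g d1) d2"
    using ty_comp.IH(2)[OF d1(1,2)] by blast
  have tf: "ty f = Some (l1, l2)" "ty g = Some (l2, l3)" using ty_comp(1,2) by (simp_all add: mtyped_iff)
  have "meqv (MComp (MComp g f) c) (MComp g (MComp f c))"
    by (rule m_assoc') (simp add: tf ty_comp.prems)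
  also have "meqv \<dots> (MComp g d1)"
    by (rule m_compR[OF d1(3)]) (simp add: tf ty_comp.prems)
  also have "meqv \<dots> d2" by (rule d2(3))
  finally show ?case using d2 by blast
qed

lemma ex_nf: "mtyped f L1 L2 \<Longrightarrow> \<exists>d. NF d \<and> ty d = Some (L1, L2) \<and> meqv f d"
proof -
  assume f: "mtyped f L1 L2"
  obtain c where c: "NF c" "ty c = Some (L1, L1)" "meqv c (MId L1)" using nf_id by blast
  obtain d where d: "NF d" "ty d = Some (L1, L2)" "meqv (MComp f c) d"
    using ex_nf_comp[OF f c(1,2)] by blast
  have tf: "ty f = Some (L1, L2)" using f by (simp add: mtyped_iff)
  have "meqv f (MComp f (MId L1))" by (rule m_sym, rule m_id_right[OF tf])
  also have "meqv \<dots> (MComp f c)" by (rule m_compR[OF m_sym[OF c(3)]]) (simp add: tf)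
  also have "meqv \<dots> d" by (rule d(3))
  finally show ?thesis using d by blast
qed

lemma unidx_inj: "unidx i a = unidx i b \<Longrightarrow> a = b"
  by (metis idx_unidx)

lemma nf_unique: "NF d1 \<Longrightarrow> NF d2 \<Longrightarrow> ty d1 = Some (L, M) \<Longrightarrow> ty d2 = Some (L, M) \<Longrightarrow>
   (\<forall>i < length M. mperm d1 i = mperm d2 i) \<Longrightarrow> d1 = d2"
proof (induction arbitrary: d2 L M rule: NF.induct)
  case nf_nil
  from nf_nil.prems(1) show ?case
  proof cases
    case nf_nil then show ?thesis by simp
  next
    case (nf_cons c i L x l)
    then show ?thesis using nf_nil.prems by auto
  qed
next
  case (nf_cons c i L1 x l)
  from nf_cons.prems(1) show ?case
  proof cases
    case nf_nil then show ?thesis using nf_cons by auto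
  next
    case (nf_cons c2 i2 L2 x2 l2)
    have eqs: "L2 = L1" "x2 = x" "l2 = l" "L = L1" "M = x # l"
      using nf_cons nf_cons.prems nf_cons.hyps by auto
    have m0: "mperm d2 0 = i2" using nf_cons mperm_bring0 by simp
    have "mperm (MComp (MCons x c) (bring i L1)) 0 = i" using nf_cons.hyps mperm_bring0 by simp
    then have ii: "i2 = i" using nf_cons.prems(4) m0 eqs by force
    have "\<forall>j < length l. mperm c j = mperm c2 j"
    proof (intro allI impI)
      fix j assume "j < length l"
      then have "Suc j < length M" using eqs by simp
      then have "mperm (MComp (MCons x c) (bring i L1)) (Suc j) = mperm d2 (Suc j)"
        using nf_cons.prems(4) by blast
      then have "unidx i (mperm c j) = unidx i (mperm c2 j)"
        using nf_cons nf_cons.hyps mperm_bringS[of i L1] ii eqs by simp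
      then show "mperm c j = mperm c2 j" by (rule unidx_inj)
    qed
    then have "c = c2" using nf_cons.IH[of c2 "rem i L1" l] nf_cons nf_cons.hyps ii eqs by simp
    then show ?thesis using nf_cons ii eqs by simp
  qed
qed



lemma mperm_inj: "inj (mperm f)"
proof (induction f)
  case (MSw a b l) then show ?case by (auto simp: inj_on_def)
next
  case (MCons x f)
  show ?case
  proof (rule injI)
    fix a b assume "mperm (MCons x f) a = mperm (MCons x f) b"
    then show "a = b" using MCons injD[OF MCons] by (cases a; cases b) auto
  qed
next
  case (MComp g f) then show ?case using inj_compose[of "mperm f" "mperm g"] by (simp add: comp_def)
qed simp

lemma mperm_typed: "mtyped f L1 L2 \<Longrightarrow> length L1 = length L2 \<and>
   (\<forall>i < length L2. mperm f i < length L1 \<and> L1 ! mperm f i = L2 ! i)"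
proof (induction rule: mtyped.induct)
  case (ty_sw a b l)
  have "mperm (MSw a b l) i < length (a # b # l) \<and> (a # b # l) ! mperm (MSw a b l) i = (b # a # l) ! i"
    if "i < length (b # a # l)" for i
    using that by (cases i; cases "i - 1") auto
  then show ?case by simp
next
  case (ty_cons f l l' x)
  have "mperm (MCons x f) i < length (x # l) \<and> (x # l) ! mperm (MCons x f) i = (x # l') ! i"
    if "i < length (x # l')" for i
    using that ty_cons by (cases i) auto
  then show ?case using ty_cons by simp
qed auto

lemma mperm_bij: "mtyped f L1 L2 \<Longrightarrow> bij_betw (mperm f) {..<length L2} {..<length L1}"
proof -
  assume f: "mtyped f L1 L2"
  note m = mperm_typed[OF f]
  have sub: "mperm f ` {..<length L2} \<subseteq> {..<length L2}" using m by auto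
  have inj: "inj_on (mperm f) {..<length L2}" using mperm_inj inj_on_subset by blast
  have "mperm f ` {..<length L2} = {..<length L2}" using endo_inj_surj[OF _ sub inj] by simp
  then show ?thesis using inj m by (simp add: bij_betw_def)
qed

lemma construct: "bij_betw \<phi> {..<length L2} {..<length L1} \<Longrightarrow> (\<forall>i < length L2. L1 ! (\<phi> i) = L2 ! i)
   \<Longrightarrow> \<exists>f. mtyped f L1 L2 \<and> (\<forall>i < length L2. mperm f i = \<phi> i)"
proof (induction L2 arbitrary: L1 \<phi>)
  case Nil
  then have "L1 = []" using bij_betw_same_card by fastforce
  then show ?case by (auto intro: ty_id)
next
  case (Cons y l2)
  have len: "length L1 = Suc (length l2)" using bij_betw_same_card[OF Cons.prems(1)] by simp
  define i where "i = \<phi> 0"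
  have il: "i < length L1" using Cons.prems(1) by (auto simp: i_def bij_betw_def)
  have Li: "L1 ! i = y" using Cons.prems(2) by (auto simp: i_def)
  define \<psi> where "\<psi> j = idx i (\<phi> (Suc j))" for j
  have phS: "\<phi> (Suc j) \<noteq> i \<and> \<phi> (Suc j) < length L1" if "j < length l2" for j
  proof -
    have "\<phi> (Suc j) \<noteq> \<phi> 0" using Cons.prems(1) that
      by (auto simp: bij_betw_def inj_on_def)
    moreover have "\<phi> (Suc j) < length L1" using Cons.prems(1) that by (auto simp: bij_betw_def)
    ultimately show ?thesis by (simp add: i_def)
  qed
  have un: "unidx i (\<psi> j) = \<phi> (Suc j)" if "j < length l2" for j
    using phS[OF that] by (simp add: \<psi>_def)
  have bij: "bij_betw \<psi> {..<length l2} {..<length (rem i L1)}"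
  proof -
    have inj: "inj_on \<psi> {..<length l2}"
    proof (rule inj_onI)
      fix a b assume "a \<in> {..<length l2}" "b \<in> {..<length l2}" "\<psi> a = \<psi> b"
      then have "\<phi> (Suc a) = \<phi> (Suc b)" using un by (metis lessThan_iff)
      moreover have "Suc a \<in> {..<length (y # l2)}" "Suc b \<in> {..<length (y # l2)}"
        using \<open>a \<in> _\<close> \<open>b \<in> _\<close> by auto
      ultimately show "a = b" using Cons.prems(1) by (auto simp: bij_betw_def inj_on_def)
    qed
    have sub: "\<psi> ` {..<length l2} \<subseteq> {..<length (rem i L1)}"
    proof
      fix k assume "k \<in> \<psi> ` {..<length l2}"
      then obtain j where j: "j < length l2" "k = \<psi> j" by auto
      show "k \<in> {..<length (rem i L1)}" using phS[OF j(1)] j il len by (auto simp: \<psi>_def idx_def)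
    qed
    have "card (\<psi> ` {..<length l2}) = card {..<length (rem i L1)}"
      using card_image[OF inj] il len by simp
    then have "\<psi> ` {..<length l2} = {..<length (rem i L1)}"
      using card_subset_eq[OF _ sub] by simp
    then show ?thesis using inj by (simp add: bij_betw_def)
  qed
  have nth: "\<forall>j < length l2. rem i L1 ! (\<psi> j) = l2 ! j"
  proof (intro allI impI)
    fix j assume j: "j < length l2"
    have "\<psi> j < length L1 - 1" using bij j il by (auto simp: bij_betw_def)
    then have "rem i L1 ! (\<psi> j) = L1 ! \<phi> (Suc j)" using nth_rem[OF il] un[OF j] by simp
    also have "\<dots> = l2 ! j" using Cons.prems(2) j by force
    finally show "rem i L1 ! (\<psi> j) = l2 ! j" .
  qed
  obtain f' where f': "mtyped f' (rem i L1) l2" "\<forall>j < length l2. mperm f' j = \<psi> j"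
    using Cons.IH[OF bij nth] by blast
  let ?f = "MComp (MCons y f') (bring i L1)"
  have "mtyped ?f L1 (y # l2)"
    using f'(1) ty_bring[OF il] Li by (simp add: mtyped_iff)
  moreover have "\<forall>k < length (y # l2). mperm ?f k = \<phi> k"
  proof (intro allI impI)
    fix k assume k: "k < length (y # l2)"
    show "mperm ?f k = \<phi> k"
    proof (cases k)
      case 0 then show ?thesis using mperm_bring0[OF il] by (simp add: i_def)
    next
      case (Suc j)
      then have j: "j < length l2" using k by simp
      then show ?thesis using Suc mperm_bringS[OF il] f'(2) un[OF j] by simp
    qed
  qed
  ultimately show ?case by blast
qed

theorem corollary2p9:
  fixes L1 L2 :: "'c list"
  shows "bij_betw (assoc_bij L2) (slist_hom L1 L2)
           {\<phi> \<in> extensional {..<length L2}.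
              bij_betw \<phi> {..<length L2} {..<length L1} \<and>
              (\<forall>i < length L2. L1 ! (\<phi> i) = L2 ! i)}"
proof -
  let ?n = "length L2"
  define cls where "cls f = {g. mtyped g L1 L2 \<and> meqv f g}" for f :: "'c mterm"
  have hom: "slist_hom L1 L2 = cls ` {f. mtyped f L1 L2}"
    by (auto simp: slist_hom_def quotient_def slist_rel_def cls_def)
  have ab: "assoc_bij L2 (cls f) = restrict (mperm f) {..<?n}" if f: "mtyped f L1 L2" for f
  proof -
    have "(\<lambda>g. restrict (mperm g) {..<?n}) ` cls f = {restrict (mperm f) {..<?n}}"
    proof
      show "(\<lambda>g. restrict (mperm g) {..<?n}) ` cls f \<subseteq> {restrict (mperm f) {..<?n}}"
        by (auto simp: cls_def dest!: meqv_sound)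
      have "f \<in> cls f" using f by (auto simp: cls_def intro: eq_refl)
      then show "{restrict (mperm f) {..<?n}} \<subseteq> (\<lambda>g. restrict (mperm g) {..<?n}) ` cls f" by blast
    qed
    then show ?thesis by (simp add: assoc_bij_def)
  qed
  have faithful: "meqv f g" if f: "mtyped f L1 L2" and g: "mtyped g L1 L2"
     and e: "\<forall>i < ?n. mperm f i = mperm g i" for f g
  proof -
    obtain d1 where d1: "NF d1" "ty d1 = Some (L1, L2)" "meqv f d1" using ex_nf[OF f] by blast
    obtain d2 where d2: "NF d2" "ty d2 = Some (L1, L2)" "meqv g d2" using ex_nf[OF g] by blast
    have "\<forall>i < ?n. mperm d1 i = mperm d2 i"
      using e meqv_sound[OF d1(3)] meqv_sound[OF d2(3)] by simp
    then have "d1 = d2" using nf_unique[OF d1(1) d2(1) d1(2) d2(2)] by simp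
    then show ?thesis using d1(3) d2(3) by (metis eq_sym eq_trans)
  qed
  show ?thesis
  proof (rule bij_betw_imageI)
    show "inj_on (assoc_bij L2) (slist_hom L1 L2)"
    proof (rule inj_onI)
      fix X Y assume X: "X \<in> slist_hom L1 L2" and Y: "Y \<in> slist_hom L1 L2"
        and XY: "assoc_bij L2 X = assoc_bij L2 Y"
      obtain f where f: "mtyped f L1 L2" "X = cls f" using X hom by blast
      obtain g where g: "mtyped g L1 L2" "Y = cls g" using Y hom by blast
      have "restrict (mperm f) {..<?n} = restrict (mperm g) {..<?n}" using XY f g ab by simp
      then have "\<forall>i < ?n. mperm f i = mperm g i" by (metis lessThan_iff restrict_apply')
      then have "meqv f g" using faithful f g by blast
      then show "X = Y" using f g unfolding cls_def by (blast intro: eq_sym eq_trans)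
    qed
    show "assoc_bij L2 ` slist_hom L1 L2 = {\<phi> \<in> extensional {..<length L2}.
              bij_betw \<phi> {..<length L2} {..<length L1} \<and> (\<forall>i < length L2. L1 ! (\<phi> i) = L2 ! i)}"
    proof (rule equalityI)
      show "assoc_bij L2 ` slist_hom L1 L2 \<subseteq> {\<phi> \<in> extensional {..<length L2}.
              bij_betw \<phi> {..<length L2} {..<length L1} \<and> (\<forall>i < length L2. L1 ! (\<phi> i) = L2 ! i)}"
      proof
        fix \<phi> assume "\<phi> \<in> assoc_bij L2 ` slist_hom L1 L2"
        then obtain f where f: "mtyped f L1 L2" "\<phi> = restrict (mperm f) {..<?n}"
          using hom ab by auto
        show "\<phi> \<in> {\<phi> \<in> extensional {..<length L2}.
              bij_betw \<phi> {..<length L2} {..<length L1} \<and> (\<forall>i < length L2. L1 ! (\<phi> i) = L2 ! i)}"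
          using f mperm_bij[OF f(1)] mperm_typed[OF f(1)] by auto
      qed
      show "{\<phi> \<in> extensional {..<length L2}.
              bij_betw \<phi> {..<length L2} {..<length L1} \<and> (\<forall>i < length L2. L1 ! (\<phi> i) = L2 ! i)}
            \<subseteq> assoc_bij L2 ` slist_hom L1 L2"
      proof
        fix \<phi> assume "\<phi> \<in> {\<phi> \<in> extensional {..<length L2}.
              bij_betw \<phi> {..<length L2} {..<length L1} \<and> (\<forall>i < length L2. L1 ! (\<phi> i) = L2 ! i)}"
        then have p: "\<phi> \<in> extensional {..<?n}" "bij_betw \<phi> {..<length L2} {..<length L1}"
          "\<forall>i < length L2. L1 ! (\<phi> i) = L2 ! i" by auto
        obtain f where f: "mtyped f L1 L2" "\<forall>i < ?n. mperm f i = \<phi> i"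
          using construct[OF p(2,3)] by blast
        have "restrict (mperm f) {..<?n} = \<phi>"
          using f(2) p(1) by (auto simp: fun_eq_iff extensional_def)
        then have "assoc_bij L2 (cls f) = \<phi>" using ab[OF f(1)] by simp
        moreover have "cls f \<in> slist_hom L1 L2" using hom f(1) by blast
        ultimately show "\<phi> \<in> assoc_bij L2 ` slist_hom L1 L2" by blast
      qed
    qed
  qed
qed

end
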